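(* Let $\mathsf{L}\in\{\mathbf{PD},\mathsf{InqL},\mathbf{PT}\}$. For all formulas $\phi,\psi$ in the language of $\mathsf{L}$ and every flat substitution $\sigma$ of $\mathsf{L}$: if $\phi\vdash_{\mathsf L}\psi$ then $\sigma(\phi)\vdash_{\mathsf L}\sigma(\psi)$. In particular, $\phi\equiv\psi$ implies $\sigma(\phi)\equiv\sigma(\psi)$ for every flat substitution $\sigma$.
   Context: Fix a countably infinite set Prop of propositional variables. A valuation is a function $v:\mathrm{Prop}\to\{0,1\}$; a team is a set of valuations. Formulas of $\mathbf{PT}$: $\phi::=p\mid\bot\mid\top\mid\,=\!(\phi_1,\dots,\phi_n,\phi)\mid\neg\phi\mid\phi\wedge\phi\mid\phi\otimes\phi\mid\phi\vee\phi\mid\phi\to\phi$. Satisfaction on a team $X$: $X\models p$ iff $v(p)=1$ for all $v\in X$; $X\models\bot$ iff $X=\emptyset$; $X\models\top$ always; $\wedge$ is conjunction of conditions; $X\models\phi\otimes\psi$ iff $X=Y\cup Z$ with $Y\models\phi$, $Z\models\psi$; $X\models\phi\vee\psi$ iff $X\models\phi$ or $X\models\psi$; $X\models\phi\to\psi$ iff every $Y\subseteq X$ with $Y\models\phi$ satisfies $\psi$; $X\models\neg\phi$ iff $\{v\}\not\models\phi$ for all $v\in X$; $X\models\,=\!(\phi_1,\dots,\phi_n,\psi)$ iff $X\models\bigwedge_i(\phi_i\vee(\phi_i\to\bot))\to(\psi\vee(\psi\to\bot))$. $\phi$ is flat if for all teams $X$: $X\models\phi$ iff $\{v\}\models\phi$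 for all $v\in X$. Formulas of $\mathbf{PD}$: $\phi::=p\mid\bot\mid\top\mid\,=\!(\vec\alpha,\beta)\mid\neg\phi\mid\phi\wedge\phi\mid\phi\otimes\phi$ with $\vec\alpha,\beta$ flat, evaluated by the same clauses (for flat arguments: $X\models\,=\!(\vec\alpha,\beta)$ iff any $v,v'\in X$ agreeing on the truth of each $\alpha_i$ on singletons also agree on the truth of $\beta$). $\mathsf{InqL}$: formulas built from $p,\bot,\top$ by $\wedge,\vee,\to$ with the same clauses. For finite $\Gamma$, $\Gamma\vdash_{\mathsf L}\phi$ iff all formulas are in the language of $\mathsf L$ and every team satisfying all of $\Gamma$ satisfies $\phi$. $\phi\equiv\psi$ means $\phi$ and $\psi$ are satisfied by exactly the same teams. A substitution of $\mathsf L$ is a map on $\mathsf L$-formulas commuting with all connectives and atoms (including $\neg$ and $=\!(\cdot)$); it is flat if each $\sigma(p)$ is flat. *)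

theory Defs
  imports Main
begin

type_synonym valuation = "nat \<Rightarrow> bool"
type_synonym team = "valuation set"

datatype fm =
    Atom nat
  | Bot
  | Top
  | Dep "fm list" fm      (* =(phi_1,...,phi_n, phi) *)
  | Neg fm
  | Conj fm fm
  | Tensor fm fm
  | Disj fm fm            (* intuitionistic / inquisitive disjunction *)
  | Imp fm fm

text \<open>Satisfaction. The clause for the dependence atom is the literal unfolding of
  X |= /\_i (phi_i v (phi_i -> bot)) -> (psi v (psi -> bot)).\<close>
fun sat :: "team \<Rightarrow> fm \<Rightarrow> bool" where
  "sat X (Atom p) = (\<forall>v\<in>X. v p)"
| "sat X Bot = (X = {})"
| "sat X Top = True"
| "sat X (Dep phis psi) =
     (\<forall>Y\<subseteq>X. (\<forall>phi\<in>set phis. sat Y phi \<or> (\<forall>Z\<subseteq>Y. sat Z phi \<longrightarrow> Z = {}))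
        \<longrightarrow> (sat Y psi \<or> (\<forall>Z\<subseteq>Y. sat Z psi \<longrightarrow> Z = {})))"
| "sat X (Neg phi) = (\<forall>v\<in>X. \<not> sat {v} phi)"
| "sat X (Conj phi psi) = (sat X phi \<and> sat X psi)"
| "sat X (Tensor phi psi) = (\<exists>Y Z. X = Y \<union> Z \<and> sat Y phi \<and> sat Z psi)"
| "sat X (Disj phi psi) = (sat X phi \<or> sat X psi)"
| "sat X (Imp phi psi) = (\<forall>Y\<subseteq>X. sat Y phi \<longrightarrow> sat Y psi)"

definition flat :: "fm \<Rightarrow> bool" where
  "flat phi \<longleftrightarrow> (\<forall>X. sat X phi \<longleftrightarrow> (\<forall>v\<in>X. sat {v} phi))"

datatype logic = PD | InqL | PT

fun pd_fm :: "fm \<Rightarrow> bool" where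
  "pd_fm (Atom p) = True"
| "pd_fm Bot = True"
| "pd_fm Top = True"
| "pd_fm (Dep alphas beta) =
     ((\<forall>a\<in>set alphas. pd_fm a \<and> flat a) \<and> pd_fm beta \<and> flat beta)"
| "pd_fm (Neg phi) = pd_fm phi"
| "pd_fm (Conj phi psi) = (pd_fm phi \<and> pd_fm psi)"
| "pd_fm (Tensor phi psi) = (pd_fm phi \<and> pd_fm psi)"
| "pd_fm (Disj phi psi) = False"
| "pd_fm (Imp phi psi) = False"

fun inql_fm :: "fm \<Rightarrow> bool" where
  "inql_fm (Atom p) = True"
| "inql_fm Bot = True"
| "inql_fm Top = True"
| "inql_fm (Dep alphas beta) = False"
| "inql_fm (Neg phi) = False"
| "inql_fm (Conj phi psi) = (inql_fm phi \<and> inql_fm psi)"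
| "inql_fm (Tensor phi psi) = False"
| "inql_fm (Disj phi psi) = (inql_fm phi \<and> inql_fm psi)"
| "inql_fm (Imp phi psi) = (inql_fm phi \<and> inql_fm psi)"

fun in_lang :: "logic \<Rightarrow> fm \<Rightarrow> bool" where
  "in_lang PD phi = pd_fm phi"
| "in_lang InqL phi = inql_fm phi"
| "in_lang PT phi = True"

definition entails :: "logic \<Rightarrow> fm list \<Rightarrow> fm \<Rightarrow> bool" where
  "entails L Gamma phi \<longleftrightarrow>
     (\<forall>g\<in>set Gamma. in_lang L g) \<and> in_lang L phi \<and>
     (\<forall>X. (\<forall>g\<in>set Gamma. sat X g) \<longrightarrow> sat X phi)"

definition equiv_fm :: "fm \<Rightarrow> fm \<Rightarrow> bool" where
  "equiv_fm phi psi \<longleftrightarrow> (\<forall>X. sat X phi \<longleftrightarrow> sat X psi)"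

fun subst :: "(nat \<Rightarrow> fm) \<Rightarrow> fm \<Rightarrow> fm" where
  "subst s (Atom p) = s p"
| "subst s Bot = Bot"
| "subst s Top = Top"
| "subst s (Dep phis psi) = Dep (map (subst s) phis) (subst s psi)"
| "subst s (Neg phi) = Neg (subst s phi)"
| "subst s (Conj phi psi) = Conj (subst s phi) (subst s psi)"
| "subst s (Tensor phi psi) = Tensor (subst s phi) (subst s psi)"
| "subst s (Disj phi psi) = Disj (subst s phi) (subst s psi)"
| "subst s (Imp phi psi) = Imp (subst s phi) (subst s psi)"

definition flat_subst_of :: "logic \<Rightarrow> (nat \<Rightarrow> fm) \<Rightarrow> bool" where
  "flat_subst_of L s \<longleftrightarrow> (\<forall>p. in_lang L (s p) \<and> flat (s p))"

end

theory Submission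
  imports Defs
begin
lemma sub_image: "Y' \<subseteq> f ` X \<Longrightarrow> f ` (X \<inter> f -` Y') = Y' \<and> X \<inter> f -` Y' \<subseteq> X"
  by blast
lemma all_sub_image:
  "(\<forall>Y'\<subseteq>f ` X. P Y') \<longleftrightarrow> (\<forall>Y\<subseteq>X. P (f ` Y))"
proof
  assume "\<forall>Y'\<subseteq>f ` X. P Y'" then show "\<forall>Y\<subseteq>X. P (f ` Y)" by blast
next
  assume h: "\<forall>Y\<subseteq>X. P (f ` Y)"
  show "\<forall>Y'\<subseteq>f ` X. P Y'"
  proof (intro allI impI)
    fix Y' assume "Y' \<subseteq> f ` X"
    then have "f ` (X \<inter> f -` Y') = Y'" "X \<inter> f -` Y' \<subseteq> X" by blast+
    then show "P Y'" using h by metis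
  qed
qed
definition vmap :: "(nat \<Rightarrow> fm) \<Rightarrow> valuation \<Rightarrow> valuation" where
  "vmap s v = (\<lambda>p. sat {v} (s p))"

lemma sat_subst:
  assumes "\<forall>p. flat (s p)"
  shows "sat X (subst s phi) \<longleftrightarrow> sat (vmap s ` X) phi"
proof (induction phi arbitrary: X)
  case (Atom p)
  have "sat X (s p) \<longleftrightarrow> (\<forall>v\<in>X. sat {v} (s p))" using assms unfolding flat_def by blast
  then show ?case by (simp add: vmap_def)
next
  case Bot then show ?case by simp
next
  case Top then show ?case by simp
next
  case (Dep phis psi)
  have e1: "\<And>Y. (\<forall>phi\<in>set phis. sat Y (subst s phi) \<or> (\<forall>Z\<subseteq>Y. sat Z (subst s phi) \<longrightarrow> Z = {}))
     \<longleftrightarrow> (\<forall>phi\<in>set phis. sat (vmap s ` Y) phi \<or> (\<forall>Z\<subseteq>vmap s ` Y. sat Z phi \<longrightarrow> Z = {}))"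
  proof -
    fix Y
    have "\<And>phi. phi \<in> set phis \<Longrightarrow> (sat Y (subst s phi) \<or> (\<forall>Z\<subseteq>Y. sat Z (subst s phi) \<longrightarrow> Z = {}))
     \<longleftrightarrow> (sat (vmap s ` Y) phi \<or> (\<forall>Z\<subseteq>vmap s ` Y. sat Z phi \<longrightarrow> Z = {}))"
      unfolding all_sub_image[where f="vmap s" and X=Y] using Dep.IH(1) by simp
    then show "?thesis Y" by (meson)
  qed
  have e2: "\<And>Y. (sat Y (subst s psi) \<or> (\<forall>Z\<subseteq>Y. sat Z (subst s psi) \<longrightarrow> Z = {}))
     \<longleftrightarrow> (sat (vmap s ` Y) psi \<or> (\<forall>Z\<subseteq>vmap s ` Y. sat Z psi \<longrightarrow> Z = {}))"
    unfolding all_sub_image[where f="vmap s"] using Dep.IH(2) by simp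
  have "sat X (subst s (Dep phis psi)) = (\<forall>Y\<subseteq>X. (\<forall>phi\<in>set phis. sat (vmap s ` Y) phi \<or> (\<forall>Z\<subseteq>vmap s ` Y. sat Z phi \<longrightarrow> Z = {}))
        \<longrightarrow> (sat (vmap s ` Y) psi \<or> (\<forall>Z\<subseteq>vmap s ` Y. sat Z psi \<longrightarrow> Z = {})))"
    by (simp only: subst.simps sat.simps set_map ball_simps e1 e2)
  also have "\<dots> = sat (vmap s ` X) (Dep phis psi)"
    unfolding sat.simps all_sub_image[where f="vmap s" and X=X] ..
  finally show ?case .
next
  case (Neg phi)
  have "\<And>v. sat {v} (subst s phi) \<longleftrightarrow> sat {vmap s v} phi" using Neg.IH by simp
  then show ?case by simp
next
  case (Conj phi psi) then show ?case by simp
next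
  case (Tensor phi psi)
  show ?case
  proof
    assume "sat X (subst s (Tensor phi psi))"
    then obtain Y Z where "X = Y \<union> Z" "sat Y (subst s phi)" "sat Z (subst s psi)" by (simp only: subst.simps sat.simps) blast
    note h = this
    have a: "vmap s ` X = vmap s ` Y \<union> vmap s ` Z" using h(1) by blast
    have b: "sat (vmap s ` Y) phi" using h(2) Tensor.IH(1)[of Y] by simp
    have c: "sat (vmap s ` Z) psi" using h(3) Tensor.IH(2)[of Z] by simp
    show "sat (vmap s ` X) (Tensor phi psi)" unfolding sat.simps using a b c by (intro exI[of _ "vmap s ` Y"] exI[of _ "vmap s ` Z"] conjI)
  next
    assume "sat (vmap s ` X) (Tensor phi psi)"
    then obtain Y' Z' where h: "vmap s ` X = Y' \<union> Z'" "sat Y' phi" "sat Z' psi" by (simp only: sat.simps) blast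
    let ?Y = "X \<inter> vmap s -` Y'" and ?Z = "X \<inter> vmap s -` Z'"
    have s1: "Y' \<subseteq> vmap s ` X" "Z' \<subseteq> vmap s ` X" using h(1) by (simp_all only: Un_upper1 Un_upper2)
    have e1: "vmap s ` ?Y = Y'" using sub_image[OF s1(1)] by (rule conjunct1)
    have e2: "vmap s ` ?Z = Z'" using sub_image[OF s1(2)] by (rule conjunct1)
    have e3: "X = ?Y \<union> ?Z"
    proof (rule set_eqI)
      fix x
      have "x \<in> X \<Longrightarrow> vmap s x \<in> Y' \<union> Z'" using h(1) by (metis imageI)
      then show "x \<in> X \<longleftrightarrow> x \<in> ?Y \<union> ?Z" by auto
    qed
    note e = e1 e2 e3
    have "sat ?Y (subst s phi)" using Tensor.IH(1)[of ?Y] e(1) h(2) by simp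
    moreover have "sat ?Z (subst s psi)" using Tensor.IH(2)[of ?Z] e(2) h(3) by simp
    ultimately show "sat X (subst s (Tensor phi psi))" unfolding subst.simps sat.simps using e(3) by (intro exI[of _ ?Y] exI[of _ ?Z] conjI)
  qed
next
  case (Disj phi psi) then show ?case by simp
next
  case (Imp phi psi)
  show ?case unfolding subst.simps sat.simps all_sub_image[where f="vmap s" and X=X] using Imp.IH by simp
qed

lemma flat_subst:
  assumes "\<forall>p. flat (s p)" "flat phi"
  shows "flat (subst s phi)"
  unfolding flat_def
proof
  fix X
  have f: "\<And>X. sat X phi = (\<forall>w\<in>X. sat {w} phi)" using assms(2) unfolding flat_def by (rule spec)
  have "sat X (subst s phi) = sat (vmap s ` X) phi" by (rule sat_subst[OF assms(1)])
  also have "\<dots> = (\<forall>w\<in>vmap s ` X. sat {w} phi)" by (rule f)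
  also have "\<dots> = (\<forall>v\<in>X. sat {vmap s v} phi)" by simp
  also have "\<dots> = (\<forall>v\<in>X. sat (vmap s ` {v}) phi)" by simp
  also have "\<dots> = (\<forall>v\<in>X. sat {v} (subst s phi))" using sat_subst[OF assms(1)] by presburger
  finally show "sat X (subst s phi) = (\<forall>v\<in>X. sat {v} (subst s phi))" .
qed

lemma pd_subst:
  assumes "\<forall>p. pd_fm (s p)" "\<forall>p. flat (s p)"
  shows "pd_fm phi \<Longrightarrow> pd_fm (subst s phi)"
proof (induction phi)
  case (Dep phis psi)
  then show ?case using flat_subst[OF assms(2)] by simp
qed (use assms(1) in simp_all)

lemma inql_subst:
  assumes "\<forall>p. inql_fm (s p)"
  shows "inql_fm phi \<Longrightarrow> inql_fm (subst s phi)"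
  by (induction phi) (use assms in simp_all)

lemma lang_subst:
  assumes "flat_subst_of L s" "in_lang L phi"
  shows "in_lang L (subst s phi)"
proof (cases L)
  case PD
  have "\<forall>p. pd_fm (s p)" "\<forall>p. flat (s p)" using assms(1) PD unfolding flat_subst_of_def by simp_all
  then show ?thesis using pd_subst assms(2) PD by simp
next
  case InqL
  have "\<forall>p. inql_fm (s p)" using assms(1) InqL unfolding flat_subst_of_def by simp
  then show ?thesis using inql_subst assms(2) InqL by simp
qed simp

theorem theorem3p7:
  fixes L :: logic and phi psi :: fm and s :: "nat \<Rightarrow> fm"
  assumes "in_lang L phi" and "in_lang L psi" and "flat_subst_of L s"
  shows "(entails L [phi] psi \<longrightarrow> entails L [subst s phi] (subst s psi))
       \<and> (equiv_fm phi psi \<longrightarrow> equiv_fm (subst s phi) (subst s psi))"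
proof -
  have fl: "\<forall>p. flat (s p)" using assms(3) by (simp add: flat_subst_of_def)
  show ?thesis
    using lang_subst[OF assms(3) assms(1)] lang_subst[OF assms(3) assms(2)]
    unfolding entails_def equiv_fm_def by (simp add: sat_subst[OF fl, of _ phi] sat_subst[OF fl, of _ psi])
qed

end
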